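(* Let $G(T)$ be the graph inverse semigroup of the unary tree $T$, endowed with a Hausdorff topology making it a semitopological semigroup. If there exists $k\in\omega$ such that $0$ is not an accumulation point of the set $L_k^*$, then $0$ is not an accumulation point of $L_n^*$ for every $n\in\omega$.
   Context: A semitopological semigroup is a space with separately continuous associative multiplication. The unary tree $T$ has vertex set $\omega$ and edges $(n,n+1)$ with source $n$ and range $n+1$. For $k\le p$, $(k,p)$ denotes the unique path from vertex $k$ to vertex $p$ (with $(n,n)$ the vertex $n$). The graph inverse semigroup $G(T)$ is the semigroup with zero $0$ generated by the vertices, the edges and formal inverses $e^{-1}$ of the edges subject to: for vertices $a,b$: $ab=a$ if $a=b$, else $0$; for edges $e,f$: $s(e)e=er(e)=e$, $e^{-1}s(e)=r(e)e^{-1}=e^{-1}$, $e^{-1}f=r(e)$ if $e=f$, else $0$. Each non-zero element is uniquely $uv^{-1}$ with paths $u,v$ having the same range. For $n\in\omega$, $L_n=\{(n,m)(n,m)^{-1}\mid m\ge n\}\cup\{0\}$ and $L_n^*=L_n\setminus\{0\}$. *)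

theory Defs
  imports "HOL-Analysis.Analysis"
begin

text \<open>A non-zero element u v^-1 with u = (a,p), v = (b,p) (paths in T with common range p)
  is encoded as Some (a, b, p) with a \<le> p, b \<le> p; the zero 0 is None.\<close>

type_synonym git = "(nat \<times> nat \<times> nat) option"

definition git_carrier :: "git set" where
  "git_carrier = {None} \<union> {Some (a, b, p) | a b p. a \<le> p \<and> b \<le> p}"

fun git_mult :: "git \<Rightarrow> git \<Rightarrow> git" where
  "git_mult None y = None"
| "git_mult (Some x) None = None"
| "git_mult (Some (a, b, p)) (Some (c, d, q)) =
     (if b = c then Some (a, d, max p q) else None)"

text \<open>The element (n,m)(n,m)^-1 is Some (n,n,m). L_n^* = L_n minus 0.\<close>
definition Lstar :: "nat \<Rightarrow> git set" where
  "Lstar n = {Some (n, n, m) | m. n \<le> m}"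

definition semitopological_git :: "git topology \<Rightarrow> bool" where
  "semitopological_git X \<longleftrightarrow> topspace X = git_carrier \<and>
     (\<forall>x\<in>git_carrier. continuous_map X X (\<lambda>y. git_mult x y) \<and>
                      continuous_map X X (\<lambda>y. git_mult y x))"

end

theory Submission
  imports Defs
begin

theorem lemma4p5:
  fixes X :: "git topology"
  assumes "semitopological_git X"
    and "Hausdorff_space X"
    and "\<exists>k. None \<notin> X derived_set_of (Lstar k)"
  shows "\<forall>n. None \<notin> X derived_set_of (Lstar n)"
proof
  fix n
  obtain k where k: "None \<notin> X derived_set_of (Lstar k)" using assms(3) by blast
  have top: "topspace X = git_carrier" using assms(1) unfolding semitopological_git_def by blast
  have Nt: "None \<in> topspace X" using top unfolding git_carrier_def by blast
  then obtain T where T: "openin X T" "None \<in> T" and TL: "\<And>y. y \<noteq> None \<Longrightarrow> y \<in> Lstar k \<Longrightarrow> y \<notin> T"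
    using k unfolding derived_set_of_def by blast
  define p where "p = max n k"
  define a :: git where "a = Some (k, n, p)"
  define b :: git where "b = Some (n, k, p)"
  have ac: "a \<in> git_carrier" and bc: "b \<in> git_carrier"
    unfolding a_def b_def p_def git_carrier_def by auto
  define g where "g = (\<lambda>y. git_mult (git_mult a y) b)"
  have c1: "continuous_map X X (\<lambda>y. git_mult a y)"
    using assms(1) ac unfolding semitopological_git_def by blast
  have c2: "continuous_map X X (\<lambda>y. git_mult y b)"
    using assms(1) bc unfolding semitopological_git_def by blast
  have cg: "continuous_map X X g"
    unfolding g_def using continuous_map_compose[OF c1 c2] by (simp add: o_def)
  define U where "U = {y \<in> topspace X. g y \<in> T}"
  have U: "openin X U" unfolding U_def using openin_continuous_map_preimage[OF cg T(1)] .
  have NU: "None \<in> U" unfolding U_def g_def a_def using Nt T(2) by simp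
  show "None \<notin> X derived_set_of (Lstar n)"
  proof
    assume "None \<in> X derived_set_of (Lstar n)"
    then obtain y where y: "y \<noteq> None" "y \<in> Lstar n" "y \<in> U"
      using U NU unfolding derived_set_of_def by blast
    then obtain m where m: "y = Some (n, n, m)" "n \<le> m" unfolding Lstar_def by blast
    have gy: "g y = Some (k, k, max p m)" unfolding g_def a_def b_def m by (simp add: p_def)
    have "g y \<in> Lstar k" unfolding gy Lstar_def p_def by auto
    moreover have "g y \<in> T" using y(3) unfolding U_def by blast
    ultimately show False using TL gy by blast
  qed
qed

end
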